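(* Consider a steady travelling-wave solution of the one-dimensional solid-propellant combustion model described in the context, with $c<0$, and assume the solid and gas specific heats are equal, $c_s=c_p$. Then the burnt-gas temperature $T_f:=\lim_{x\to+\infty}T(x)$ satisfies $$T_f=T_0+\frac{Q_g+Q_p}{c_p}.$$
   Context: Travelling-wave frame: solid in $x<0$, gas in $x>0$, interface at $x=0$; $c<0$ is the constant regression velocity, $\rho_s>0$ the solid density, $\dot m:=-\rho_s c>0$. Constants: solid specific heat $c_s>0$ and conductivity $\lambda_s>0$, $D_s:=\lambda_s/(\rho_s c_s)$; gas specific heat $c_p>0$ and conductivity $\lambda_g>0$; common molar mass $M>0$ of the two gas species; stoichiometric coefficient $\nu<0$ of the reactant; molar heat of the gas reaction $Q_{mol}>0$, and $Q_g:=-Q_{mol}/(\nu M)>0$; pyrolysis heat $Q_p\in\mathbb R$ (per unit mass of propellant); initial temperature $T_0>0$. Unknowns: $T:\mathbb R\to(0,\infty)$ continuous, $C^2$ on $(-\infty,0]$ and on $[0,\infty)$ (one-sided derivatives at $0$); on $x>0$: $\rho>0,u$ of class $C^1$, reactant mass fraction $Y$ of class $C^2$, species diffusivity $D_g>0$ continuous, reaction rate $\omega(x)=\omega(T(x),Y(x))\ge0$ continuous. Equations: $-cT'-D_sT''=0$ for $x<0$; for $x>0$: $-c\rho'+(\rho u)'=0$, $\rho(u-c)Y'-(\rho D_gY')'=\nu M\omega$, $\rho(u-c)T'-(\lambda_g T'/c_p)'=\omega Q_{mol}/c_p$. Boundary/interface conditions: $T(x)\to T_0$ and $T'(x)\to0$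 as $x\to-\infty$; $T(0^-)=T(0^+)=T_s$; $\lambda_sT'(0^-)=\dot m Q_p+\lambda_gT'(0^+)$; $\rho(0^+)(u(0^+)-c)=-\rho_s c$; injection mass fraction $Y(0^-)=1$; $\dot m Y(0^-)=\dot m Y(0^+)-\rho(0^+)D_g(0^+)Y'(0^+)$; as $x\to+\infty$: $T(x)\to T_f$ (finite), $T'(x)\to0$, $Y(x)\to0$, $\rho D_gY'(x)\to0$. *)

theory Defs
  imports "HOL-Analysis.Analysis"
begin

end

theory Submission
  imports Defs
begin

lemma const_gen:
  fixes f :: "real \<Rightarrow> real"
  assumes "a < b" "continuous_on {a..b} f" "\<And>x. a < x \<Longrightarrow> x < b \<Longrightarrow> (f has_real_derivative 0) (at x)"
  shows "f b = f a"
proof -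
  have "\<And>x. a < x \<Longrightarrow> x < b \<Longrightarrow> f differentiable (at x)"
    using assms(3) real_differentiable_def by blast
  then obtain l z where z: "a < z" "z < b" "DERIV f z :> l" "f b - f a = (b - a) * l"
    using MVT[OF assms(1,2)] by blast
  have "l = 0" using DERIV_unique[OF z(3) assms(3)[OF z(1,2)]] .
  then show ?thesis using z(4) by simp
qed

lemma const_right:
  fixes f :: "real \<Rightarrow> real"
  assumes "continuous_on {a..} f" "\<And>x. a < x \<Longrightarrow> (f has_real_derivative 0) (at x)" "a \<le> x"
  shows "f x = f a"
proof (cases "x = a")
  case False
  then have "a < x" using assms(3) by simp
  moreover have "continuous_on {a..x} f" using assms(1) continuous_on_subset by fastforce
  ultimately show ?thesis using const_gen[of a x f] assms(2) by simp
qed simp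

lemma const_left:
  fixes f :: "real \<Rightarrow> real"
  assumes "continuous_on {..b} f" "\<And>x. x < b \<Longrightarrow> (f has_real_derivative 0) (at x)" "x \<le> b"
  shows "f x = f b"
proof (cases "x = b")
  case False
  then have "x < b" using assms(3) by simp
  moreover have "continuous_on {x..b} f" using assms(1) continuous_on_subset by fastforce
  ultimately show ?thesis using const_gen[of x b f] assms(2) by simp
qed simp

lemma within_to_at_left:
  fixes x :: real
  assumes "(f has_real_derivative D) (at x within {..0})" "x < 0"
  shows "(f has_real_derivative D) (at x)"
proof -
  have "at x within {..0} = at x" by (rule at_within_open_subset[where S="{..<0}"]) (use assms in auto)
  then show ?thesis using assms by simp
qed

lemma within_to_at_right:
  fixes x :: real
  assumes "(f has_real_derivative D) (at x within {0..})" "x > 0"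
  shows "(f has_real_derivative D) (at x)"
proof -
  have "at x within {0..} = at x" by (rule at_within_open_subset[where S="{0<..}"]) (use assms in auto)
  then show ?thesis using assms by simp
qed

theorem proposition3:
  fixes c rho_s c_s lambda_s c_p lambda_g M nu Q_mol Q_p T0 Tf Ts :: real
    and T TL1 TL2 TR1 TR2 :: "real \<Rightarrow> real"
    and rho rho1 u u1 Y Y1 Y2 Dg G1 :: "real \<Rightarrow> real"
    and W :: "real \<Rightarrow> real \<Rightarrow> real"
  assumes c_neg: "c < 0"
    and rho_s_pos: "rho_s > 0" and c_s_pos: "c_s > 0" and lambda_s_pos: "lambda_s > 0"
    and c_p_pos: "c_p > 0" and lambda_g_pos: "lambda_g > 0" and M_pos: "M > 0"
    and nu_neg: "nu < 0" and Q_mol_pos: "Q_mol > 0" and T0_pos: "T0 > 0"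
    and equal_heats: "c_s = c_p"
    \<comment> \<open>T positive; C^2 on (-inf,0] and on [0,inf) with one-sided derivatives at 0\<close>
    and T_pos: "\<forall>x. T x > 0"
    and TL1_der: "\<forall>x\<le>0. (T has_real_derivative TL1 x) (at x within {..0})"
    and TL2_der: "\<forall>x\<le>0. (TL1 has_real_derivative TL2 x) (at x within {..0})"
    and TL2_cont: "continuous_on {..0} TL2"
    and TR1_der: "\<forall>x\<ge>0. (T has_real_derivative TR1 x) (at x within {0..})"
    and TR2_der: "\<forall>x\<ge>0. (TR1 has_real_derivative TR2 x) (at x within {0..})"
    and TR2_cont: "continuous_on {0..} TR2"
    \<comment> \<open>gas-phase unknowns on [0,inf) (values at 0 are the 0+ traces)\<close>
    and rho_pos: "\<forall>x\<ge>0. rho x > 0"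
    and rho1_der: "\<forall>x\<ge>0. (rho has_real_derivative rho1 x) (at x within {0..})"
    and rho1_cont: "continuous_on {0..} rho1"
    and u1_der: "\<forall>x\<ge>0. (u has_real_derivative u1 x) (at x within {0..})"
    and u1_cont: "continuous_on {0..} u1"
    and Y1_der: "\<forall>x\<ge>0. (Y has_real_derivative Y1 x) (at x within {0..})"
    and Y2_der: "\<forall>x\<ge>0. (Y1 has_real_derivative Y2 x) (at x within {0..})"
    and Y2_cont: "continuous_on {0..} Y2"
    and Dg_pos: "\<forall>x\<ge>0. Dg x > 0"
    and Dg_cont: "continuous_on {0..} Dg"
    and omega_nonneg: "\<forall>x>0. W (T x) (Y x) \<ge> 0"
    and omega_cont: "continuous_on {0<..} (\<lambda>x. W (T x) (Y x))"
    \<comment> \<open>the diffusive species flux rho Dg Y' is differentiable on x>0 with derivative G1\<close>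
    and G1_der: "\<forall>x>0. ((\<lambda>y. rho y * Dg y * Y1 y) has_real_derivative G1 x) (at x)"
    \<comment> \<open>equations\<close>
    and solid_eq: "\<forall>x<0. - c * TL1 x - (lambda_s / (rho_s * c_s)) * TL2 x = 0"
    and mass_eq: "\<forall>x>0. - c * rho1 x + (rho1 x * u x + rho x * u1 x) = 0"
    and species_eq: "\<forall>x>0. rho x * (u x - c) * Y1 x - G1 x = nu * M * W (T x) (Y x)"
    and energy_eq: "\<forall>x>0. rho x * (u x - c) * TR1 x - (lambda_g / c_p) * TR2 x
                        = W (T x) (Y x) * Q_mol / c_p"
    \<comment> \<open>boundary and interface conditions\<close>
    and T_minf: "(T \<longlongrightarrow> T0) at_bot"
    and TL1_minf: "(TL1 \<longlongrightarrow> 0) at_bot"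
    and T_interface: "T 0 = Ts"
    and heat_interface: "lambda_s * TL1 0 = (- rho_s * c) * Q_p + lambda_g * TR1 0"
    and mass_interface: "rho 0 * (u 0 - c) = - rho_s * c"
    and species_interface: "(- rho_s * c) * 1 = (- rho_s * c) * Y 0 - rho 0 * Dg 0 * Y1 0"
    and T_pinf: "(T \<longlongrightarrow> Tf) at_top"
    and TR1_pinf: "(TR1 \<longlongrightarrow> 0) at_top"
    and Y_pinf: "(Y \<longlongrightarrow> 0) at_top"
    and flux_pinf: "((\<lambda>x. rho x * Dg x * Y1 x) \<longlongrightarrow> 0) at_top"
  shows "Tf = T0 + ((- Q_mol / (nu * M)) + Q_p) / c_p"
proof -
  define md where "md = - rho_s * c"
  define Ds where "Ds = lambda_s / (rho_s * c_s)"
  have md_pos: "md > 0" using c_neg rho_s_pos by (simp add: md_def mult_pos_neg)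
  define F where "F x = - c * T x - Ds * TL1 x" for x
  have Tc: "continuous_on {..0} T" by (rule DERIV_continuous_on) (use TL1_der in auto)
  have TL1c: "continuous_on {..0} TL1" by (rule DERIV_continuous_on) (use TL2_der in auto)
  have Fc: "continuous_on {..0} F" unfolding F_def by (intro continuous_intros Tc TL1c)
  have Fd: "(F has_real_derivative 0) (at x)" if "x < 0" for x
  proof -
    have a: "(T has_real_derivative TL1 x) (at x)" using within_to_at_left TL1_der that by simp
    have b: "(TL1 has_real_derivative TL2 x) (at x)" using within_to_at_left TL2_der that by simp
    have "(F has_real_derivative (- c * TL1 x - Ds * TL2 x)) (at x)"
      unfolding F_def[abs_def] by (intro DERIV_diff DERIV_cmult a b)
    moreover have "- c * TL1 x - Ds * TL2 x = 0" using solid_eq that by (simp add: Ds_def)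
    ultimately show ?thesis by simp
  qed
  have Fconst: "F x = F 0" if "x \<le> 0" for x using const_left[OF Fc Fd that] by blast
  have "(F \<longlongrightarrow> - c * T0 - Ds * 0) at_bot" unfolding F_def
    by (intro tendsto_intros T_minf TL1_minf)
  moreover have evF: "eventually (\<lambda>x. F x = F 0) at_bot"
    unfolding eventually_at_bot_linorder using Fconst by blast
  ultimately have "F 0 = - c * T0 - Ds * 0"
    using tendsto_unique[OF trivial_limit_at_bot_linorder tendsto_eventually[OF evF]] by blast
  then have F0: "F 0 = - c * T0" by simp
  define m where "m x = rho x * (u x - c)" for x
  have rhoc: "continuous_on {0..} rho" by (rule DERIV_continuous_on) (use rho1_der in auto)
  have uc: "continuous_on {0..} u" by (rule DERIV_continuous_on) (use u1_der in auto)
  have mc: "continuous_on {0..} m" unfolding m_def by (intro continuous_intros rhoc uc)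
  have md': "(m has_real_derivative 0) (at x)" if "x > 0" for x
  proof -
    have a: "(rho has_real_derivative rho1 x) (at x)" using within_to_at_right rho1_der that by simp
    have b: "(u has_real_derivative u1 x) (at x)" using within_to_at_right u1_der that by simp
    have "(m has_real_derivative (rho1 x * (u x - c) + rho x * u1 x)) (at x)"
      unfolding m_def[abs_def] by (rule DERIV_cong[OF DERIV_mult[OF a DERIV_diff[OF b DERIV_const]]]) simp
    moreover have "rho1 x * (u x - c) + rho x * u1 x = 0" using mass_eq that by (simp add: algebra_simps)
    ultimately show ?thesis by simp
  qed
  have mconst: "m x = md" if "x \<ge> 0" for x
    using const_right[OF mc md' that] mass_interface by (simp add: m_def md_def)
  define k where "k = Q_mol / (c_p * nu * M)"
  define G where "G x = rho x * Dg x * Y1 x" for x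
  define H where "H x = md * T x - (lambda_g / c_p) * TR1 x - k * (md * Y x - G x)" for x
  have Tc2: "continuous_on {0..} T" by (rule DERIV_continuous_on) (use TR1_der in auto)
  have TR1c: "continuous_on {0..} TR1" by (rule DERIV_continuous_on) (use TR2_der in auto)
  have Yc: "continuous_on {0..} Y" by (rule DERIV_continuous_on) (use Y1_der in auto)
  have Y1c: "continuous_on {0..} Y1" by (rule DERIV_continuous_on) (use Y2_der in auto)
  have Hc: "continuous_on {0..} H" unfolding H_def G_def
    by (intro continuous_intros Tc2 TR1c Yc Y1c rhoc Dg_cont)
  have Hd: "(H has_real_derivative 0) (at x)" if "x > 0" for x
  proof -
    have a: "(T has_real_derivative TR1 x) (at x)" using within_to_at_right TR1_der that by simp
    have b: "(TR1 has_real_derivative TR2 x) (at x)" using within_to_at_right TR2_der that by simp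
    have cc: "(Y has_real_derivative Y1 x) (at x)" using within_to_at_right Y1_der that by simp
    have d: "(G has_real_derivative G1 x) (at x)" using G1_der that unfolding G_def by simp
    have "(H has_real_derivative (md * TR1 x - (lambda_g / c_p) * TR2 x - k * (md * Y1 x - G1 x))) (at x)"
      unfolding H_def[abs_def] by (intro DERIV_diff DERIV_cmult a b cc d)
    moreover have "md * TR1 x - (lambda_g / c_p) * TR2 x - k * (md * Y1 x - G1 x) = 0"
    proof -
      have mm: "rho x * (u x - c) = md" using mconst[of x] that by (simp add: m_def)
      have e1: "md * TR1 x - (lambda_g / c_p) * TR2 x = W (T x) (Y x) * Q_mol / c_p"
        using energy_eq that mm by auto
      have e2: "md * Y1 x - G1 x = nu * M * W (T x) (Y x)"
        using species_eq that mm by auto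
      have "k * (nu * M * W (T x) (Y x)) = W (T x) (Y x) * Q_mol / c_p"
        using nu_neg M_pos c_p_pos by (simp add: k_def field_simps)
      then show ?thesis using e1 e2 by simp
    qed
    ultimately show ?thesis by simp
  qed
  have Hconst: "H x = H 0" if "x \<ge> 0" for x using const_right[OF Hc Hd that] by blast
  have "(H \<longlongrightarrow> md * Tf - (lambda_g / c_p) * 0 - k * (md * 0 - 0)) at_top" unfolding H_def G_def
    by (intro tendsto_intros T_pinf TR1_pinf Y_pinf flux_pinf)
  moreover have evH: "eventually (\<lambda>x. H x = H 0) at_top"
    unfolding eventually_at_top_linorder using Hconst by blast
  ultimately have "H 0 = md * Tf - (lambda_g / c_p) * 0 - k * (md * 0 - 0)"
    using tendsto_unique[OF trivial_limit_at_top_linorder tendsto_eventually[OF evH]] by blast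
  then have H0: "H 0 = md * Tf" by simp
  have s1: "md * Y 0 - G 0 = md" using species_interface unfolding md_def G_def by linarith
  have H0a: "H 0 = md * Ts - (lambda_g / c_p) * TR1 0 - k * (md * Y 0 - G 0)"
    unfolding H_def T_interface ..
  have H0': "md * Tf = md * Ts - (lambda_g / c_p) * TR1 0 - k * md"
    using H0 H0a s1 by simp
  have F0a: "F 0 = - c * Ts - Ds * TL1 0" unfolding F_def T_interface ..
  have F0': "Ds * TL1 0 = - c * (Ts - T0)" using F0 F0a by (simp add: algebra_simps)
  have L: "lambda_s * TL1 0 = md * c_p * (Ts - T0)"
  proof -
    have "lambda_s = (rho_s * c_s) * Ds" using rho_s_pos c_s_pos by (simp add: Ds_def)
    then have "lambda_s * TL1 0 = (rho_s * c_s) * (Ds * TL1 0)" by simp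
    also have "\<dots> = md * c_p * (Ts - T0)" unfolding F0' equal_heats md_def by simp
    finally show ?thesis .
  qed
  have gt: "lambda_g * TR1 0 = md * c_p * (Ts - T0) - md * Q_p"
    using heat_interface L unfolding md_def by linarith
  have gt2: "(lambda_g / c_p) * TR1 0 = md * (Ts - T0) - md * Q_p / c_p"
  proof -
    have "(lambda_g / c_p) * TR1 0 = (lambda_g * TR1 0) / c_p" by simp
    also have "\<dots> = md * (Ts - T0) - md * Q_p / c_p" unfolding gt using c_p_pos by (simp add: diff_divide_distrib)
    finally show ?thesis .
  qed
  have "md * Tf = md * (T0 + Q_p / c_p - k)" using H0' gt2 by (simp add: algebra_simps)
  then have Tfk: "Tf = T0 + Q_p / c_p - k" using md_pos by simp
  have "k = Q_mol / (nu * M) / c_p" unfolding k_def by simp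
  then show ?thesis using Tfk by (simp add: add_divide_distrib diff_divide_distrib)
qed

end
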